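(* Let $\tau_0$ be the empty matching and for $n>0$ let $\tau_{2n-1}=\tau_{2n-2}(m+1)(m+1)$, where $m=|\tau_{2n-2}|$ (juxtaposition of $\tau_{2n-2}$ with a single edge), and $\tau_{2n}=1(\tau_{2n-1}+1)1$ (the lifting of $\tau_{2n-1}$). Let $f_{n,k}$ be the number of matchings with exactly $k$ edges in the interval $[11,\tau_n]$ of the matching pattern poset, and $f_n=|[11,\tau_n]|$. Then for $n>0$ and $0<k\leq n$: (i) $f_{n,k}=\sum_{i=0}^{n-k}\binom{k-1}{i}$; (ii) $f_{n}=\varphi_{n+2}-1$, where $\varphi_m$ is the $m$-th Fibonacci number ($\varphi_0=0,\varphi_1=\varphi_2=1$).
   Context: A matching of order $n$ is a partition of $[2n]$ into blocks (edges) of size two, identified with the word in $[n]^{2n}$ where both vertices of an edge carry the same letter and letters appear in increasing order of left vertices; $11$ is the matching with one edge. For a matching $\alpha$, $\alpha+1$ is its word with $1$ added to every letter, and words are concatenated. The matching pattern poset orders matchings by $\sigma\le\tau$ iff $\sigma$ is a pattern of $\tau$: with $|\sigma|=k$, there are $i_1<\dots<i_{2k}$ with $\{i_p,i_q\}\in\tau$ iff $\{p,q\}\in\sigma$. The interval $[11,\tau]$ is the set of matchings $\sigma$ with $11\le\sigma\le\tau$. *)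

theory Defs
  imports Main "HOL-Number_Theory.Fib"
begin

text \<open>A matching of order n is encoded as its canonical word over letters 1..n:
  every letter occurs exactly twice, and letters are introduced in increasing order
  of left vertices (the first occurrence of a new letter is 1 + number of letters seen so far).\<close>
definition is_matching :: "nat list \<Rightarrow> bool" where
  "is_matching w \<longleftrightarrow>
     (\<forall>a \<in> set w. count_list w a = 2) \<and>
     (\<forall>p < length w. w ! p \<in> set (take p w) \<or> w ! p = card (set (take p w)) + 1)"

definition is_pattern :: "nat list \<Rightarrow> nat list \<Rightarrow> bool" where
  "is_pattern \<sigma> \<tau> \<longleftrightarrow>
     (\<exists>g :: nat \<Rightarrow> nat.
        strict_mono_on {..<length \<sigma>} g \<and>
        (\<forall>p < length \<sigma>. g p < length \<tau>) \<and>
        (\<forall>p < length \<sigma>. \<forall>q < length \<sigma>. p \<noteq> q \<longrightarrow>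
            (\<tau> ! g p = \<tau> ! g q \<longleftrightarrow> \<sigma> ! p = \<sigma> ! q)))"

definition interval11 :: "nat list \<Rightarrow> nat list set" where
  "interval11 \<tau> = {\<sigma>. is_matching \<sigma> \<and> is_pattern [1,1] \<sigma> \<and> is_pattern \<sigma> \<tau>}"

fun tau :: "nat \<Rightarrow> nat list" where
  "tau 0 = []"
| "tau (Suc n) =
     (if even n then tau n @ [length (tau n) div 2 + 1, length (tau n) div 2 + 1]
      else 1 # map Suc (tau n) @ [1])"

end

theory Submission
  imports Defs
begin

lemma matching_prefix_set:
  assumes "is_matching w" "p \<le> length w"
  shows "set (take p w) = {1..card (set (take p w))}"
  using assms(2)
proof (induction p)
  case 0 then show ?case by simp
next
  case (Suc p)
  have p: "p < length w" using Suc.prems by simp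
  have tk: "take (Suc p) w = take p w @ [w ! p]" using p by (simp add: take_Suc_conv_app_nth)
  have IH: "set (take p w) = {1..card (set (take p w))}" using Suc by simp
  have "w ! p \<in> set (take p w) \<or> w ! p = card (set (take p w)) + 1"
    using assms(1) p unfolding is_matching_def by blast
  then show ?case
  proof
    assume "w ! p \<in> set (take p w)"
    then show ?thesis using IH tk by (simp add: insert_absorb)
  next
    assume h: "w ! p = card (set (take p w)) + 1"
    have "set (take (Suc p) w) = insert (card (set (take p w)) + 1) {1..card (set (take p w))}"
      using tk IH h by simp
    also have "\<dots> = {1..card (set (take p w)) + 1}" by auto
    finally show ?thesis by simp
  qed
qed

lemma matching_set:
  assumes "is_matching w"
  shows "set w = {1..card (set w)}"
  using matching_prefix_set[OF assms, of "length w"] by simp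

lemma matching_length:
  assumes "is_matching w"
  shows "length w = 2 * card (set w)"
proof -
  have "length w = sum (count_list w) (set w)" using sum_count_set[of w "set w"] by simp
  also have "\<dots> = sum (\<lambda>_. 2) (set w)"
    using assms unfolding is_matching_def by (intro sum.cong) auto
  finally show ?thesis by simp
qed

lemma matching_card: "is_matching w \<Longrightarrow> card (set w) = length w div 2"
  using matching_length by fastforce

lemma matching_set2: "is_matching w \<Longrightarrow> set w = {1..length w div 2}"
  using matching_set matching_card by metis

lemma matching_no0: "is_matching w \<Longrightarrow> 0 \<notin> set w"
  using matching_set2 by fastforce

lemma matching_partner:
  assumes "is_matching w" "p < length w"
  shows "\<exists>q < length w. q \<noteq> p \<and> w ! q = w ! p"
proof (rule ccontr)
  assume "\<not> ?thesis"
  then have sub: "{i. i < length w \<and> w ! p = w ! i} \<subseteq> {p}" by auto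
  have "count_list w (w ! p) = card {i. i < length w \<and> w ! p = w ! i}"
    by (simp add: count_list_eq_length_filter length_filter_conv_card)
  also have "\<dots> \<le> 1" using card_mono[OF _ sub] by simp
  finally show False using assms unfolding is_matching_def by simp
qed

definition app :: "nat list \<Rightarrow> nat list" where
  "app t = t @ [length t div 2 + 1, length t div 2 + 1]"

definition lft :: "nat list \<Rightarrow> nat list" where
  "lft t = 1 # map Suc t @ [1]"

lemma app_matching:
  assumes m: "is_matching t"
  shows "is_matching (app t)"
proof -
  let ?c = "length t div 2 + 1"
  have cn: "?c \<notin> set t" using matching_set2[OF m] by auto
  have cnt: "\<forall>a \<in> set (app t). count_list (app t) a = 2"
  proof
    fix a assume "a \<in> set (app t)"
    then have "a \<in> set t \<or> a = ?c" by (auto simp: app_def)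
    then show "count_list (app t) a = 2"
    proof
      assume a: "a \<in> set t"
      then have "a \<noteq> ?c" using cn by auto
      then show ?thesis using a m unfolding is_matching_def app_def by auto
    next
      assume "a = ?c" then show ?thesis using cn by (simp add: app_def)
    qed
  qed
  have pre: "\<forall>p < length (app t). app t ! p \<in> set (take p (app t)) \<or> app t ! p = card (set (take p (app t))) + 1"
  proof (intro allI impI)
    fix p assume p: "p < length (app t)"
    have "p < length t + 2" using p by (simp add: app_def)
    then consider "p < length t" | "p = length t" | "p = length t + 1" by linarith
    then show "app t ! p \<in> set (take p (app t)) \<or> app t ! p = card (set (take p (app t))) + 1"
    proof cases
      case 1 then show ?thesis using m unfolding is_matching_def app_def by (auto simp: nth_append)
    next
      case 2 then show ?thesis using matching_card[OF m] by (simp add: app_def nth_append)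
    next
      case 3 then show ?thesis by (simp add: app_def nth_append)
    qed
  qed
  show ?thesis using cnt pre unfolding is_matching_def by blast
qed

lemma app_dec:
  assumes m: "is_matching (s @ [c, c])" and cn: "c \<notin> set s"
  shows "is_matching s \<and> c = length s div 2 + 1"
proof -
  have cnt: "\<forall>a \<in> set s. count_list s a = 2"
  proof
    fix a assume a: "a \<in> set s"
    then have "a \<noteq> c" using cn by auto
    then show "count_list s a = 2" using a m unfolding is_matching_def by auto
  qed
  have pre: "\<forall>p < length s. s ! p \<in> set (take p s) \<or> s ! p = card (set (take p s)) + 1"
  proof (intro allI impI)
    fix p assume p: "p < length s"
    have H: "\<forall>p < length (s @ [c, c]). (s @ [c, c]) ! p \<in> set (take p (s @ [c, c])) \<or> (s @ [c, c]) ! p = card (set (take p (s @ [c, c]))) + 1"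
      using m unfolding is_matching_def by blast
    have "(s @ [c, c]) ! p \<in> set (take p (s @ [c, c])) \<or> (s @ [c, c]) ! p = card (set (take p (s @ [c, c]))) + 1"
      using H[rule_format, of p] p by simp
    then show "s ! p \<in> set (take p s) \<or> s ! p = card (set (take p s)) + 1"
      using p by (simp add: nth_append)
  qed
  have ms: "is_matching s" using cnt pre unfolding is_matching_def by blast
  have H: "\<forall>p < length (s @ [c, c]). (s @ [c, c]) ! p \<in> set (take p (s @ [c, c])) \<or> (s @ [c, c]) ! p = card (set (take p (s @ [c, c]))) + 1"
    using m unfolding is_matching_def by blast
  have "(s @ [c, c]) ! length s \<in> set (take (length s) (s @ [c, c])) \<or> (s @ [c, c]) ! length s = card (set (take (length s) (s @ [c, c]))) + 1"
    using H[rule_format, of "length s"] by simp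
  then have "c = card (set s) + 1" using cn by simp
  then show ?thesis using ms matching_card[OF ms] by simp
qed

lemma count_map_Suc: "count_list (map Suc xs) (Suc a) = count_list xs a"
  by (induction xs) auto

lemma count_map_Suc1: "count_list (map Suc xs) 0 = 0"
  by (induction xs) auto

lemma lft_matching_iff:
  assumes z: "0 \<notin> set s"
  shows "is_matching (lft s) \<longleftrightarrow> is_matching s"
proof -
  have one: "1 \<notin> set (map Suc s)" using z by auto
  have cnt: "(\<forall>a \<in> set (lft s). count_list (lft s) a = 2) \<longleftrightarrow> (\<forall>a \<in> set s. count_list s a = 2)"
  proof -
    have c1: "count_list (lft s) 1 = 2" using one by (simp add: lft_def)
    have c2: "count_list (lft s) (Suc a) = count_list s a" if "a \<in> set s" for a
    proof -
      have "0 < a" using that z by (metis gr0I)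
      then show ?thesis using that z by (auto simp: lft_def count_map_Suc)
    qed
    have "set (lft s) = insert 1 (Suc ` set s)" by (auto simp: lft_def)
    then show ?thesis using c1 c2 by auto
  qed
  have tk: "take (Suc p) (lft s) = 1 # map Suc (take p s)" if "p \<le> length s" for p
    using that by (simp add: lft_def take_map)
  have cardtk: "card (set (1 # map Suc (take p s))) = Suc (card (set (take p s)))" for p
  proof -
    have "1 \<notin> Suc ` set (take p s)" using z by (auto dest: in_set_takeD)
    moreover have "card (Suc ` set (take p s)) = card (set (take p s))" by (simp add: card_image)
    ultimately show ?thesis by simp
  qed
  have nthl: "lft s ! Suc p = Suc (s ! p)" if "p < length s" for p
    using that by (simp add: lft_def nth_append)
  have pre: "(\<forall>p < length (lft s). lft s ! p \<in> set (take p (lft s)) \<or> lft s ! p = card (set (take p (lft s))) + 1)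
     \<longleftrightarrow> (\<forall>p < length s. s ! p \<in> set (take p s) \<or> s ! p = card (set (take p s)) + 1)"
  proof -
    have P0: "lft s ! 0 \<in> set (take 0 (lft s)) \<or> lft s ! 0 = card (set (take 0 (lft s))) + 1"
      by (simp add: lft_def)
    have Plast: "lft s ! Suc (length s) \<in> set (take (Suc (length s)) (lft s))"
      by (simp add: lft_def nth_append take_map)
    have Pmid: "(lft s ! Suc p \<in> set (take (Suc p) (lft s)) \<or> lft s ! Suc p = card (set (take (Suc p) (lft s))) + 1)
       \<longleftrightarrow> (s ! p \<in> set (take p s) \<or> s ! p = card (set (take p s)) + 1)" if p: "p < length s" for p
    proof -
      have "s ! p \<noteq> 0" using p z nth_mem by metis
      then show ?thesis using p nthl[OF p] tk[of p] cardtk[of p] by auto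
    qed
    have len: "length (lft s) = Suc (Suc (length s))" by (simp add: lft_def)
    show ?thesis
    proof
      assume H: "\<forall>p < length (lft s). lft s ! p \<in> set (take p (lft s)) \<or> lft s ! p = card (set (take p (lft s))) + 1"
      show "\<forall>p < length s. s ! p \<in> set (take p s) \<or> s ! p = card (set (take p s)) + 1"
      proof (intro allI impI)
        fix p assume p: "p < length s"
        then have "Suc p < length (lft s)" using len by simp
        then show "s ! p \<in> set (take p s) \<or> s ! p = card (set (take p s)) + 1" using H Pmid[OF p] by blast
      qed
    next
      assume H: "\<forall>p < length s. s ! p \<in> set (take p s) \<or> s ! p = card (set (take p s)) + 1"
      show "\<forall>p < length (lft s). lft s ! p \<in> set (take p (lft s)) \<or> lft s ! p = card (set (take p (lft s))) + 1"
      proof (intro allI impI)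
        fix p assume p: "p < length (lft s)"
        consider "p = 0" | q where "p = Suc q" "q < length s" | "p = Suc (length s)"
          using p len by (cases p) (auto simp: less_Suc_eq)
        then show "lft s ! p \<in> set (take p (lft s)) \<or> lft s ! p = card (set (take p (lft s))) + 1"
        proof cases
          case 1 then show ?thesis using P0 by simp
        next
          case 2 then show ?thesis using H Pmid by blast
        next
          case 3 then show ?thesis using Plast by simp
        qed
      qed
    qed
  qed
  show ?thesis using cnt pre unfolding is_matching_def by blast
qed

lemma lft_matching: "is_matching t \<Longrightarrow> is_matching (lft t)"
  using lft_matching_iff matching_no0 by blast

lemma lft_dec:
  assumes m: "is_matching (c # mid @ [c])" and cn: "c \<notin> set mid"
  shows "c = 1 \<and> (\<exists>s. mid = map Suc s \<and> is_matching s)"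
proof -
  have c1: "c = 1" using m unfolding is_matching_def by (auto elim: allE[of _ 0])
  have z: "0 \<notin> set mid" using matching_no0[OF m] by auto
  define s where "s = map (\<lambda>x. x - 1) mid"
  have ms: "mid = map Suc s" unfolding s_def using z c1 cn
    by (induction mid) auto
  have "0 \<notin> set s" using ms c1 cn by auto
  moreover have "lft s = c # mid @ [c]" using ms c1 by (simp add: lft_def)
  ultimately have "is_matching s" using lft_matching_iff m by metis
  then show ?thesis using c1 ms by blast
qed

lemma smo_iff: "strict_mono_on {..<(n::nat)} (g :: nat \<Rightarrow> nat) \<longleftrightarrow> (\<forall>p q. p < q \<longrightarrow> q < n \<longrightarrow> g p < g q)"
proof -
  have "strict_mono_on {..<n} g \<longleftrightarrow> (\<forall>r s. r < n \<and> s < n \<and> r < s \<longrightarrow> g r < g s)"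
    unfolding strict_mono_on_def by auto
  also have "\<dots> \<longleftrightarrow> (\<forall>p q. p < q \<longrightarrow> q < n \<longrightarrow> g p < g q)"
  proof (intro iffI allI impI)
    fix p q assume H: "\<forall>r s. r < n \<and> s < n \<and> r < s \<longrightarrow> g r < g s" "p < q" "q < n"
    then have "p < n" by simp
    then show "g p < g q" using H by blast
  next
    fix p q assume H: "\<forall>p q. p < q \<longrightarrow> q < n \<longrightarrow> g p < g q" "p < n \<and> q < n \<and> p < q"
    then show "g p < g q" by blast
  qed
  finally show ?thesis .
qed

lemma is_pattern_iff: "is_pattern s t \<longleftrightarrow> (\<exists>g. (\<forall>p q. p < q \<longrightarrow> q < length s \<longrightarrow> g p < g q) \<and>
        (\<forall>p < length s. g p < length t) \<and>
        (\<forall>p < length s. \<forall>q < length s. p \<noteq> q \<longrightarrow> (t ! g p = t ! g q \<longleftrightarrow> s ! p = s ! q)))"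
  unfolding is_pattern_def smo_iff by simp

lemma pat_refl: "is_pattern s s"
  unfolding is_pattern_iff by (rule exI[of _ id]) auto

lemma pat_trans:
  assumes "is_pattern a b" "is_pattern b c"
  shows "is_pattern a c"
proof -
  obtain g1 where g1: "\<forall>p q. p < q \<longrightarrow> q < length a \<longrightarrow> g1 p < g1 q" "\<forall>p < length a. g1 p < length b"
        "\<forall>p < length a. \<forall>q < length a. p \<noteq> q \<longrightarrow> (b ! g1 p = b ! g1 q \<longleftrightarrow> a ! p = a ! q)"
    using assms(1) unfolding is_pattern_iff by blast
  obtain g2 where g2: "\<forall>p q. p < q \<longrightarrow> q < length b \<longrightarrow> g2 p < g2 q" "\<forall>p < length b. g2 p < length c"
        "\<forall>p < length b. \<forall>q < length b. p \<noteq> q \<longrightarrow> (c ! g2 p = c ! g2 q \<longleftrightarrow> b ! p = b ! q)"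
    using assms(2) unfolding is_pattern_iff by blast
  have ne: "g1 p \<noteq> g1 q" if "p \<noteq> q" "p < length a" "q < length a" for p q
    using g1(1) that by (metis less_irrefl nat_neq_iff)
  show ?thesis unfolding is_pattern_iff
  proof (rule exI[of _ "g2 \<circ> g1"], intro conjI allI impI)
    fix p q assume "p < q" "q < length a"
    then show "(g2 \<circ> g1) p < (g2 \<circ> g1) q" using g1 g2 by simp
  next
    fix p assume "p < length a" then show "(g2 \<circ> g1) p < length c" using g1 g2 by simp
  next
    fix p q assume "p < length a" "q < length a" "p \<noteq> q"
    then show "(c ! (g2 \<circ> g1) p = c ! (g2 \<circ> g1) q) = (a ! p = a ! q)"
      using g1 g2 ne by simp
  qed
qed

lemma app_nth: "i < length t + 2 \<Longrightarrow> app t ! i = (if i < length t then t ! i else length t div 2 + 1)"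
  by (auto simp: app_def nth_append less_Suc_eq)

lemma app_len[simp]: "length (app t) = length t + 2" by (simp add: app_def)
lemma lft_len[simp]: "length (lft t) = length t + 2" by (simp add: lft_def)

lemma lft_nth: "i < length t + 2 \<Longrightarrow> lft t ! i = (if i = 0 then 1 else if i \<le> length t then Suc (t ! (i - 1)) else 1)"
  by (cases i) (auto simp: lft_def nth_append less_Suc_eq)

lemma pat_app_mono:
  assumes "is_pattern s t" shows "is_pattern s (app t)"
proof -
  obtain g where g: "\<forall>p q. p < q \<longrightarrow> q < length s \<longrightarrow> g p < g q" "\<forall>p < length s. g p < length t"
        "\<forall>p < length s. \<forall>q < length s. p \<noteq> q \<longrightarrow> (t ! g p = t ! g q \<longleftrightarrow> s ! p = s ! q)"
    using assms unfolding is_pattern_iff by blast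
  have e: "app t ! g p = t ! g p" if "p < length s" for p
  proof -
    have "g p < length t" using g(2) that by simp
    then show ?thesis by (simp add: app_nth)
  qed
  show ?thesis unfolding is_pattern_iff
    by (rule exI[of _ g]) (use g e in \<open>auto\<close>)
qed

lemma pat_lft_mono:
  assumes "is_pattern s t" shows "is_pattern s (lft t)"
proof -
  obtain g where g: "\<forall>p q. p < q \<longrightarrow> q < length s \<longrightarrow> g p < g q" "\<forall>p < length s. g p < length t"
        "\<forall>p < length s. \<forall>q < length s. p \<noteq> q \<longrightarrow> (t ! g p = t ! g q \<longleftrightarrow> s ! p = s ! q)"
    using assms unfolding is_pattern_iff by blast
  have e: "lft t ! Suc (g p) = Suc (t ! g p)" if "p < length s" for p
  proof -
    have "g p < length t" using g(2) that by simp
    then show ?thesis by (simp add: lft_nth)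
  qed
  show ?thesis unfolding is_pattern_iff
    by (rule exI[of _ "Suc \<circ> g"]) (use g e in \<open>auto\<close>)
qed

lemma pat_app_app:
  assumes ms: "is_matching s" and mt: "is_matching t" and P: "is_pattern s t"
  shows "is_pattern (app s) (app t)"
proof -
  obtain g where g: "\<forall>p q. p < q \<longrightarrow> q < length s \<longrightarrow> g p < g q" "\<forall>p < length s. g p < length t"
        "\<forall>p < length s. \<forall>q < length s. p \<noteq> q \<longrightarrow> (t ! g p = t ! g q \<longleftrightarrow> s ! p = s ! q)"
    using P unfolding is_pattern_iff by blast
  have cs: "length s div 2 + 1 \<notin> set s" using matching_set2[OF ms] by auto
  have ct: "length t div 2 + 1 \<notin> set t" using matching_set2[OF mt] by auto
  define h where "h j = (if j < length s then g j else j - length s + length t)" for j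
  show ?thesis unfolding is_pattern_iff
  proof (rule exI[of _ h], intro conjI allI impI)
    fix p q assume "p < q" "q < length (app s)"
    then show "h p < h q" using g unfolding h_def by auto
  next
    fix p assume "p < length (app s)" then show "h p < length (app t)" using g unfolding h_def by auto
  next
    fix p q assume pq: "p < length (app s)" "q < length (app s)" "p \<noteq> q"
    have hp: "h p < length t + 2" "h q < length t + 2" using pq g unfolding h_def by auto
    have mixed: "(app t ! h p = app t ! h q) = (app s ! p = app s ! q)"
      if a: "p < length s" "\<not> q < length s" "q < length s + 2" for p q
    proof -
      have gp: "g p < length t" using g(2) a by simp
      have tn: "t ! g p \<noteq> length t div 2 + 1" by (metis ct nth_mem gp)
      have "s ! p \<noteq> length s div 2 + 1" by (metis cs nth_mem a(1))
      then have "app s ! p \<noteq> app s ! q" using a by (auto simp: app_nth)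
      moreover have "app t ! h p \<noteq> app t ! h q" using a gp tn by (auto simp: app_nth h_def)
      ultimately show ?thesis by simp
    qed
    show "(app t ! h p = app t ! h q) = (app s ! p = app s ! q)"
    proof (cases "p < length s"; cases "q < length s")
      assume a: "p < length s" "q < length s"
      then have "g p < length t" "g q < length t" using g(2) by auto
      then show ?thesis using a pq g(3) by (simp add: app_nth h_def)
    next
      assume a: "p < length s" "\<not> q < length s"
      then show ?thesis using mixed pq by simp
    next
      assume a: "\<not> p < length s" "q < length s"
      then show ?thesis using mixed[of q p] pq by auto
    next
      assume a: "\<not> p < length s" "\<not> q < length s"
      then show ?thesis using pq hp by (simp add: app_nth h_def)
    qed
  qed
qed

lemma pat_lft_lft:
  assumes ms: "is_matching s" and mt: "is_matching t" and P: "is_pattern s t"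
  shows "is_pattern (lft s) (lft t)"
proof -
  obtain g where g: "\<forall>p q. p < q \<longrightarrow> q < length s \<longrightarrow> g p < g q" "\<forall>p < length s. g p < length t"
        "\<forall>p < length s. \<forall>q < length s. p \<noteq> q \<longrightarrow> (t ! g p = t ! g q \<longleftrightarrow> s ! p = s ! q)"
    using P unfolding is_pattern_iff by blast
  have zs: "0 \<notin> set s" using matching_no0[OF ms] .
  have zt: "0 \<notin> set t" using matching_no0[OF mt] .
  define h where "h i = (if i = 0 then 0 else if i \<le> length s then Suc (g (i - 1)) else length t + 1)" for i
  have hb: "h i < length t + 2" if "i < length s + 2" for i
  proof -
    have "g (i - 1) < length t" if "0 < i" "i \<le> length s" using g(2) that by simp
    then show ?thesis unfolding h_def by auto
  qed
  have S1: "lft s ! i = 1 \<longleftrightarrow> (i = 0 \<or> i = length s + 1)" if "i < length s + 2" for i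
  proof -
    have "s ! (i - 1) \<noteq> 0" if "0 < i" "i \<le> length s"
    proof -
      have "i - 1 < length s" using that by simp
      then show ?thesis by (metis zs nth_mem)
    qed
    then show ?thesis using that by (auto simp: lft_nth)
  qed
  have T1: "lft t ! h i = 1 \<longleftrightarrow> (i = 0 \<or> i = length s + 1)" if "i < length s + 2" for i
  proof -
    have tz: "t ! g (i - 1) \<noteq> 0" if "0 < i" "i \<le> length s"
    proof -
      have "i - 1 < length s" using that by simp
      then have "g (i - 1) < length t" using g(2) by simp
      then show ?thesis by (metis zt nth_mem)
    qed
    show ?thesis
    proof (cases "0 < i \<and> i \<le> length s")
      case True
      then have "i - 1 < length s" by linarith
      then have "g (i - 1) < length t" using g(2) by blast
      then show ?thesis using True hb[OF that] tz
        by (auto simp: lft_nth h_def)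
    next
      case False
      then show ?thesis using that hb[OF that] by (auto simp: lft_nth h_def)
    qed
  qed
  show ?thesis unfolding is_pattern_iff
  proof (rule exI[of _ h], intro conjI allI impI)
    fix p q assume "p < q" "q < length (lft s)"
    then show "h p < h q" using g unfolding h_def by auto
  next
    fix p assume "p < length (lft s)" then show "h p < length (lft t)" using hb by auto
  next
    fix p q assume pq: "p < length (lft s)" "q < length (lft s)" "p \<noteq> q"
    show "(lft t ! h p = lft t ! h q) = (lft s ! p = lft s ! q)"
    proof (cases "p = 0 \<or> p = length s + 1"; cases "q = 0 \<or> q = length s + 1")
      assume "p = 0 \<or> p = length s + 1" "q = 0 \<or> q = length s + 1"
      then show ?thesis using S1[of p] S1[of q] T1[of p] T1[of q] pq by auto
    next
      assume "p = 0 \<or> p = length s + 1" "\<not> (q = 0 \<or> q = length s + 1)"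
      then show ?thesis using S1[of p] S1[of q] T1[of p] T1[of q] pq by auto
    next
      assume "\<not> (p = 0 \<or> p = length s + 1)" "q = 0 \<or> q = length s + 1"
      then show ?thesis using S1[of p] S1[of q] T1[of p] T1[of q] pq by auto
    next
      assume a: "\<not> (p = 0 \<or> p = length s + 1)" "\<not> (q = 0 \<or> q = length s + 1)"
      then have pq': "p - 1 < length s" "q - 1 < length s" "p - 1 \<noteq> q - 1" using pq by auto
      have gb: "g (p - 1) < length t" "g (q - 1) < length t" using g(2) pq' by auto
      have pb: "0 < p" "p \<le> length s" "0 < q" "q \<le> length s" using a pq' by auto
      have e1: "lft t ! h p = Suc (t ! g (p - 1))" using gb pb by (simp add: lft_nth h_def)
      have e2: "lft t ! h q = Suc (t ! g (q - 1))" using gb pb by (simp add: lft_nth h_def)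
      have e3: "lft s ! p = Suc (s ! (p - 1))" "lft s ! q = Suc (s ! (q - 1))" using a pq' by (auto simp: lft_nth)
      have "(t ! g (p - 1) = t ! g (q - 1)) = (s ! (p - 1) = s ! (q - 1))" using g(3) pq' by blast
      then show ?thesis using e1 e2 e3 by simp
    qed
  qed
qed

lemma split_app_shape:
  assumes "length s = p + 2" "s ! (p + 1) = s ! p"
  shows "s = take p s @ [s ! p, s ! p]"
proof (rule nth_equalityI)
  show "length s = length (take p s @ [s ! p, s ! p])" using assms by simp
next
  fix i assume i: "i < length s"
  then consider "i < p" | "i = p" | "i = p + 1" using assms by linarith
  then show "s ! i = (take p s @ [s ! p, s ! p]) ! i"
    by cases (use assms in \<open>auto simp: nth_append\<close>)
qed

lemma split_lft_shape:
  assumes "length s = m + 2" "s ! (m + 1) = s ! 0"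
  shows "s = s ! 0 # take m (drop 1 s) @ [s ! 0]"
proof (rule nth_equalityI)
  show "length s = length (s ! 0 # take m (drop 1 s) @ [s ! 0])" using assms by simp
next
  fix i assume i: "i < length s"
  then consider "i = 0" | "0 < i" "i \<le> m" | "i = m + 1" using assms by linarith
  then show "s ! i = (s ! 0 # take m (drop 1 s) @ [s ! 0]) ! i"
  proof cases
    case 1 then show ?thesis by simp
  next
    case 2 then show ?thesis using assms by (cases i) (auto simp: nth_append)
  next
    case 3 then show ?thesis using assms by (simp add: nth_append)
  qed
qed

lemma pat_app_fwd:
  assumes ms: "is_matching s" and mt: "is_matching t" and P: "is_pattern s (app t)"
  shows "is_pattern s t \<or> (\<exists>s'. s = app s' \<and> is_matching s' \<and> is_pattern s' t)"
proof -
  obtain g where g: "\<forall>p q. p < q \<longrightarrow> q < length s \<longrightarrow> g p < g q" "\<forall>p < length s. g p < length t + 2"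
        "\<forall>p < length s. \<forall>q < length s. p \<noteq> q \<longrightarrow> (app t ! g p = app t ! g q \<longleftrightarrow> s ! p = s ! q)"
    using P unfolding is_pattern_iff by auto
  let ?c = "length t div 2 + 1"
  have ct: "?c \<notin> set t" using matching_set2[OF mt] by auto
  have Tlow: "app t ! i = t ! i" "app t ! i \<noteq> ?c" if "i < length t" for i
  proof -
    have "t ! i \<noteq> ?c" by (metis ct nth_mem that)
    then show "app t ! i = t ! i" "app t ! i \<noteq> ?c" using that by (simp_all add: app_nth)
  qed
  have Thigh: "app t ! i = ?c" if "length t \<le> i" "i < length t + 2" for i
    using that by (auto simp: app_nth)
  show ?thesis
  proof (cases "\<forall>p < length s. g p < length t")
    case True
    have "is_pattern s t" unfolding is_pattern_iff
    proof (rule exI[of _ g], intro conjI allI impI)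
      fix p q assume "p < q" "q < length s" then show "g p < g q" using g(1) by blast
    next
      fix p assume "p < length s" then show "g p < length t" using True by blast
    next
      fix p q assume pq: "p < length s" "q < length s" "p \<noteq> q"
      then show "(t ! g p = t ! g q) = (s ! p = s ! q)" using g(3) Tlow True by metis
    qed
    then show ?thesis by blast
  next
    case False
    then obtain p0 where p0: "p0 < length s" "length t \<le> g p0" by (meson not_less)
    obtain q0 where q0: "q0 < length s" "q0 \<noteq> p0" "s ! q0 = s ! p0"
      using matching_partner[OF ms p0(1)] by blast
    have gp0: "g p0 < length t + 2" using g(2) p0 by blast
    have gq0b: "g q0 < length t + 2" using g(2) q0 by blast
    have "app t ! g q0 = app t ! g p0" using g(3) p0 q0 by metis
    then have "app t ! g q0 = ?c" using Thigh[OF p0(2) gp0] by simp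
    then have gq0: "length t \<le> g q0" using Tlow by (meson not_less)
    define p where "p = min p0 q0"
    define q where "q = max p0 q0"
    have pq: "p < q" "q < length s" "s ! p = s ! q" "length t \<le> g p" "length t \<le> g q"
      "g q < length t + 2" "g p < length t + 2"
      using p0 q0 gp0 gq0 gq0b unfolding p_def q_def by (auto simp: min_def max_def)
    have gpq: "g p < g q" using g(1) pq by blast
    have gp: "g p = length t" and gq: "g q = length t + 1" using pq gpq by auto
    have qlast: "q + 1 = length s"
    proof (rule ccontr)
      assume "q + 1 \<noteq> length s"
      then have "q + 1 < length s" using pq by simp
      then have "g q < g (q + 1)" using g(1) by simp
      moreover have "g (q + 1) < length t + 2" using g(2) \<open>q + 1 < length s\<close> by blast
      ultimately show False using gq by simp
    qed
    have pprev: "p + 1 = q"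
    proof (rule ccontr)
      assume "p + 1 \<noteq> q"
      then have "p + 1 < q" using pq by simp
      then have "g p < g (p + 1)" "g (p + 1) < g q" using g(1) pq by auto
      then show False using gp gq by simp
    qed
    define s' where "s' = take p s"
    have len: "length s = p + 2" using qlast pprev by simp
    have seq: "s = s' @ [s ! p, s ! p]" unfolding s'_def
      using split_app_shape[OF len] pq pprev by simp
    have ls': "length s' = p" using len unfolding s'_def by simp
    have glow: "g j < length t" if "j < p" for j
    proof -
      have "g j < g p" using g(1) that pq by simp
      then show ?thesis using gp by simp
    qed
    have notin: "s ! p \<notin> set s'"
    proof
      assume "s ! p \<in> set s'"
      then obtain j where j: "j < p" "s' ! j = s ! p" using ls' by (auto simp: in_set_conv_nth)
      then have "s ! j = s ! p" unfolding s'_def by simp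
      then have "app t ! g j = app t ! g p" using g(3) j pq by (metis less_trans nat_neq_iff)
      then show False using Tlow(2)[OF glow[OF j(1)]] Thigh[of "g p"] gp by simp
    qed
    have dec: "is_matching s' \<and> s ! p = length s' div 2 + 1"
      using app_dec[of s' "s ! p"] ms seq notin by simp
    then have sapp: "s = app s'" using seq unfolding app_def by simp
    have "is_pattern s' t" unfolding is_pattern_iff
    proof (rule exI[of _ g], intro conjI allI impI)
      fix i j assume "i < j" "j < length s'" then show "g i < g j" using g(1) ls' len by simp
    next
      fix i assume "i < length s'" then show "g i < length t" using glow ls' by simp
    next
      fix i j assume ij: "i < length s'" "j < length s'" "i \<noteq> j"
      then have "(app t ! g i = app t ! g j) = (s ! i = s ! j)" using g(3) ls' len by simp
      moreover have "s' ! i = s ! i" "s' ! j = s ! j" using ij ls' unfolding s'_def by auto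
      ultimately show "(t ! g i = t ! g j) = (s' ! i = s' ! j)"
        using Tlow(1) glow ij ls' by metis
    qed
    then show ?thesis using sapp dec by blast
  qed
qed

lemma pat_lft_fwd:
  assumes ms: "is_matching s" and mt: "is_matching t" and P: "is_pattern s (lft t)"
  shows "is_pattern s t \<or> (\<exists>s'. s = lft s' \<and> is_matching s' \<and> is_pattern s' t)"
proof -
  obtain g where g: "\<forall>p q. p < q \<longrightarrow> q < length s \<longrightarrow> g p < g q" "\<forall>p < length s. g p < length t + 2"
        "\<forall>p < length s. \<forall>q < length s. p \<noteq> q \<longrightarrow> (lft t ! g p = lft t ! g q \<longleftrightarrow> s ! p = s ! q)"
    using P unfolding is_pattern_iff by auto
  have zt: "0 \<notin> set t" using matching_no0[OF mt] .
  have Tmid: "lft t ! i = Suc (t ! (i - 1))" "lft t ! i \<noteq> 1" if "0 < i" "i \<le> length t" for i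
  proof -
    have "i - 1 < length t" using that by linarith
    then have "t ! (i - 1) \<noteq> 0" by (metis zt nth_mem)
    then show "lft t ! i = Suc (t ! (i - 1))" "lft t ! i \<noteq> 1" using that by (simp_all add: lft_nth)
  qed
  have Tend: "lft t ! 0 = 1" "lft t ! (length t + 1) = 1" by (simp_all add: lft_nth)
  show ?thesis
  proof (cases "\<forall>p < length s. 0 < g p \<and> g p \<le> length t")
    case True
    have "is_pattern s t" unfolding is_pattern_iff
    proof (rule exI[of _ "\<lambda>p. g p - 1"], intro conjI allI impI)
      fix p q assume pq: "p < q" "q < length s"
      then have "g p < g q" using g(1) by blast
      moreover have "0 < g p" using True pq by simp
      ultimately show "g p - 1 < g q - 1" by linarith
    next
      fix p assume "p < length s"
      then have "0 < g p" "g p \<le> length t" using True by auto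
      then show "g p - 1 < length t" by linarith
    next
      fix p q assume pq: "p < length s" "q < length s" "p \<noteq> q"
      then have "(lft t ! g p = lft t ! g q) = (s ! p = s ! q)" using g(3) by blast
      moreover have "0 < g p" "g p \<le> length t" "0 < g q" "g q \<le> length t" using True pq by auto
      then have "lft t ! g p = Suc (t ! (g p - 1))" "lft t ! g q = Suc (t ! (g q - 1))"
        using Tmid(1) by auto
      ultimately show "(t ! (g p - 1) = t ! (g q - 1)) = (s ! p = s ! q)" by simp
    qed
    then show ?thesis by blast
  next
    case False
    then obtain p0 where p0: "p0 < length s" "g p0 = 0 \<or> length t < g p0" by (meson not_less not_gr0)
    have gp0: "g p0 < length t + 2" using g(2) p0 by blast
    have endp: "g i = 0 \<or> g i = length t + 1 \<longleftrightarrow> lft t ! g i = 1" if "i < length s" for i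
    proof -
      have "g i < length t + 2" using g(2) that by blast
      then consider "g i = 0" | "g i = length t + 1" | "0 < g i" "g i \<le> length t" by linarith
      then show ?thesis
      proof cases
        case 3 then show ?thesis using Tmid(2)[of "g i"] by simp
      qed (use Tend in auto)
    qed
    have e0: "g p0 = 0 \<or> g p0 = length t + 1" using p0 gp0 by auto
    obtain q0 where q0: "q0 < length s" "q0 \<noteq> p0" "s ! q0 = s ! p0"
      using matching_partner[OF ms p0(1)] by blast
    have "lft t ! g q0 = lft t ! g p0" using g(3) p0 q0 by metis
    then have eq0: "g q0 = 0 \<or> g q0 = length t + 1" using endp[OF q0(1)] endp[OF p0(1)] e0 by simp
    define p where "p = min p0 q0"
    define q where "q = max p0 q0"
    have pq: "p < q" "q < length s" "s ! p = s ! q" "g p = 0 \<or> g p = length t + 1"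
      "g q = 0 \<or> g q = length t + 1"
      using p0 q0 e0 eq0 unfolding p_def q_def by (auto simp: min_def max_def)
    have gpq: "g p < g q" using g(1) pq by blast
    have gp: "g p = 0" and gq: "g q = length t + 1" using pq gpq by auto
    have p00: "p = 0"
    proof (rule ccontr)
      assume "p \<noteq> 0"
      then have "g 0 < g p" using g(1) pq by simp
      then show False using gp by simp
    qed
    have qlast: "q + 1 = length s"
    proof (rule ccontr)
      assume "q + 1 \<noteq> length s"
      then have "q + 1 < length s" using pq by simp
      then have "g q < g (q + 1)" using g(1) by simp
      moreover have "g (q + 1) < length t + 2" using g(2) \<open>q + 1 < length s\<close> by blast
      ultimately show False using gq by simp
    qed
    define m where "m = q - 1"
    have qm: "q = m + 1" using pq p00 unfolding m_def by simp
    define mid where "mid = take m (drop 1 s)"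
    have len: "length s = m + 2" using qlast qm by simp
    have seq: "s = s ! 0 # mid @ [s ! 0]" unfolding mid_def
      using split_lft_shape[OF len] pq p00 qm by simp
    have lmid: "length mid = m" using len unfolding mid_def by simp
    have midn: "mid ! j = s ! (j + 1)" if "j < m" for j using that len unfolding mid_def by simp
    have gmid: "0 < g (j + 1)" "g (j + 1) \<le> length t" if "j < m" for j
    proof -
      have "g 0 < g (j + 1)" "g (j + 1) < g q" using g(1) that qm len by auto
      then show "0 < g (j + 1)" "g (j + 1) \<le> length t" using gq by auto
    qed
    have notin: "s ! 0 \<notin> set mid"
    proof
      assume "s ! 0 \<in> set mid"
      then obtain j where j: "j < m" "mid ! j = s ! 0" using lmid by (auto simp: in_set_conv_nth)
      then have "s ! (j + 1) = s ! 0" using midn by simp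
      moreover have jj: "j + 1 < length s" "(0::nat) < length s" "j + 1 \<noteq> 0" using j len by auto
      ultimately have "lft t ! g (j + 1) = lft t ! g 0" using g(3)[rule_format, of "j + 1" 0] by simp
      moreover have "g 0 = 0" using gp p00 by simp
      ultimately show False using Tmid(2)[OF gmid[OF j(1)]] Tend(1) by simp
    qed
    obtain s' where s': "s ! 0 = 1" "mid = map Suc s'" "is_matching s'"
    proof -
      have "is_matching (s ! 0 # mid @ [s ! 0])" using ms by (metis seq)
      then show ?thesis using lft_dec[of "s ! 0" mid] notin that by blast
    qed
    have slft: "s = lft s'" unfolding lft_def using seq s'(1,2) by metis
    have ls': "length s' = m" using s' lmid by simp
    have "is_pattern s' t" unfolding is_pattern_iff
    proof (rule exI[of _ "\<lambda>j. g (j + 1) - 1"], intro conjI allI impI)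
      fix i j assume ij: "i < j" "j < length s'"
      then have "g (i + 1) < g (j + 1)" using g(1) ls' len by simp
      moreover have "0 < g (i + 1)" using gmid(1)[of i] ij ls' by simp
      ultimately show "g (i + 1) - 1 < g (j + 1) - 1" by linarith
    next
      fix i assume "i < length s'"
      then have "0 < g (i + 1)" "g (i + 1) \<le> length t" using gmid ls' by auto
      then show "g (i + 1) - 1 < length t" by linarith
    next
      fix i j assume ij: "i < length s'" "j < length s'" "i \<noteq> j"
      then have "(lft t ! g (i + 1) = lft t ! g (j + 1)) = (s ! (i + 1) = s ! (j + 1))" using g(3) ls' len by simp
      moreover have "s ! (i + 1) = Suc (s' ! i)" "s ! (j + 1) = Suc (s' ! j)" using ij ls' midn s'(2) by auto
      moreover have "lft t ! g (i + 1) = Suc (t ! (g (i + 1) - 1))" "lft t ! g (j + 1) = Suc (t ! (g (j + 1) - 1))"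
        using Tmid(1) gmid ij ls' by auto
      ultimately show "(t ! (g (i + 1) - 1) = t ! (g (j + 1) - 1)) = (s' ! i = s' ! j)" by simp
    qed
    then show ?thesis using slft s' by blast
  qed
qed

definition opn :: "nat \<Rightarrow> nat list \<Rightarrow> nat list" where
  "opn n s = (if even n then app s else lft s)"

lemma tau_Suc: "tau (Suc n) = opn n (tau n)"
  by (simp add: opn_def app_def lft_def)

lemma matching_Nil: "is_matching []"
  by (simp add: is_matching_def)

lemma opn_matching: "is_matching s \<Longrightarrow> is_matching (opn n s)"
  by (simp add: opn_def app_matching lft_matching)

lemma tau_matching: "is_matching (tau n)"
proof (induction n)
  case 0 then show ?case by (simp add: matching_Nil)
next
  case (Suc n) then show ?case by (simp add: tau_Suc opn_matching del: tau.simps)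
qed

definition Q :: "nat \<Rightarrow> nat list set" where
  "Q n = {s. is_matching s \<and> is_pattern s (tau n)}"

lemma pat_Nil: "is_pattern [] t"
  unfolding is_pattern_iff by simp

lemma Nil_Q: "[] \<in> Q n"
  by (simp add: Q_def matching_Nil pat_Nil)

lemma pat_into_Nil: "is_pattern s [] \<Longrightarrow> s = []"
  unfolding is_pattern_iff by auto

lemma Q0: "Q 0 = {[]}"
  using Nil_Q pat_into_Nil pat_Nil by (auto simp: Q_def)

lemma pat_opn_mono: "is_pattern s t \<Longrightarrow> is_pattern s (opn n t)"
  by (simp add: opn_def pat_app_mono pat_lft_mono)

lemma pat_opn_opn: "is_matching s \<Longrightarrow> is_matching t \<Longrightarrow> is_pattern s t \<Longrightarrow> is_pattern (opn n s) (opn n t)"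
  by (simp add: opn_def pat_app_app pat_lft_lft)

lemma pat_opn_fwd: "is_matching s \<Longrightarrow> is_matching t \<Longrightarrow> is_pattern s (opn n t) \<Longrightarrow>
   is_pattern s t \<or> (\<exists>s'. s = opn n s' \<and> is_matching s' \<and> is_pattern s' t)"
  using pat_app_fwd pat_lft_fwd by (cases "even n") (simp_all add: opn_def)

lemma Q_step: "Q (Suc n) = Q n \<union> opn n ` Q n"
proof
  show "Q (Suc n) \<subseteq> Q n \<union> opn n ` Q n"
  proof
    fix s assume "s \<in> Q (Suc n)"
    then have "is_matching s" "is_pattern s (opn n (tau n))" by (auto simp: Q_def tau_Suc simp del: tau.simps)
    then have "is_pattern s (tau n) \<or> (\<exists>s'. s = opn n s' \<and> is_matching s' \<and> is_pattern s' (tau n))"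
      using pat_opn_fwd tau_matching by blast
    then show "s \<in> Q n \<union> opn n ` Q n" using \<open>is_matching s\<close> by (auto simp: Q_def)
  qed
next
  show "Q n \<union> opn n ` Q n \<subseteq> Q (Suc n)"
    using pat_opn_mono pat_opn_opn tau_matching opn_matching
    by (auto simp: Q_def tau_Suc simp del: tau.simps)
qed

lemma Q_mono: "Q n \<subseteq> Q (Suc n)"
  using Q_step by blast

lemma finite_Q: "finite (Q n)"
  by (induction n) (simp_all add: Q0 Q_step)

lemma pat_self_opn: "is_pattern s (opn n s)"
  using pat_opn_mono pat_refl by blast

lemma Q_down: "opn n s \<in> Q m \<Longrightarrow> is_matching s \<Longrightarrow> s \<in> Q m"
  unfolding Q_def using pat_trans pat_self_opn by blast

lemma app_inj: "app a = app b \<Longrightarrow> a = b"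
proof -
  assume h: "app a = app b"
  then have "length a = length b" using app_len by (metis add_right_cancel)
  then show "a = b" using h by (simp add: app_def)
qed

lemma lft_inj: "lft a = lft b \<Longrightarrow> a = b"
  by (simp add: lft_def inj_map_eq_map inj_Suc)

lemma opn_inj: "inj (opn n)"
  by (rule injI) (auto simp: opn_def dest: app_inj lft_inj split: if_splits)

lemma opn_len: "length (opn n s) = length s + 2"
  by (simp add: opn_def)

lemma app_lft: "is_matching a \<Longrightarrow> app a = lft b \<Longrightarrow> a = [] \<and> b = []"
proof -
  assume m: "is_matching a" and h: "app a = lft b"
  have "last (app a) = length a div 2 + 1" by (simp add: app_def)
  moreover have "last (lft b) = 1" by (simp add: lft_def)
  ultimately have "length a div 2 = 0" using h by simp
  moreover have "length a = 2 * card (set a)" using matching_length[OF m] .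
  ultimately have a: "a = []" by auto
  then have "lft b = [1, 1]" using h by (simp add: app_def)
  then have "b = []" by (simp add: lft_def)
  then show ?thesis using a by simp
qed

lemma opn_disj: "is_matching a \<Longrightarrow> is_matching b \<Longrightarrow> opn n a = opn (Suc n) b \<Longrightarrow> a = []"
  using app_lft by (auto simp: opn_def split: if_splits)

lemma opn_SS: "opn (Suc (Suc n)) = opn n"
  by (rule ext) (simp add: opn_def)

lemma Q_overlap: "Q (Suc (Suc n)) \<inter> opn n ` Q (Suc (Suc n)) = opn n ` Q n"
proof
  show "opn n ` Q n \<subseteq> Q (Suc (Suc n)) \<inter> opn n ` Q (Suc (Suc n))"
    using Q_step[of n] Q_step[of "Suc n"] by blast
next
  show "Q (Suc (Suc n)) \<inter> opn n ` Q (Suc (Suc n)) \<subseteq> opn n ` Q n"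
  proof
    fix x assume "x \<in> Q (Suc (Suc n)) \<inter> opn n ` Q (Suc (Suc n))"
    then obtain s where x: "x = opn n s" "s \<in> Q (Suc (Suc n))" "x \<in> Q (Suc (Suc n))" by blast
    have ms: "is_matching s" using x by (simp add: Q_def)
    have "x \<in> Q (Suc n) \<or> x \<in> opn (Suc n) ` Q (Suc n)" using x Q_step[of "Suc n"] by blast
    then show "x \<in> opn n ` Q n"
    proof
      assume "x \<in> opn (Suc n) ` Q (Suc n)"
      then obtain s' where "x = opn (Suc n) s'" "s' \<in> Q (Suc n)" by blast
      then have "s = []" using opn_disj[of s s' n] ms x by (simp add: Q_def)
      then show ?thesis using x Nil_Q by blast
    next
      assume "x \<in> Q (Suc n)"
      then have "x \<in> Q n \<or> x \<in> opn n ` Q n" using Q_step[of n] by blast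
      then show ?thesis
      proof
        assume "x \<in> Q n"
        then have "s \<in> Q n" using Q_down ms x by blast
        then show ?thesis using x by blast
      qed
    qed
  qed
qed

definition L :: "nat \<Rightarrow> nat list set" where
  "L k = {s. length s = 2 * k}"

lemma opn_L: "opn n ` (X \<inter> L k) = opn n ` X \<inter> L (Suc k)"
  by (auto simp: L_def opn_len)

lemma card_rec:
  "card (Q (n + 3) \<inter> L (Suc k)) + card (Q n \<inter> L k) = card (Q (n + 2) \<inter> L (Suc k)) + card (Q (n + 2) \<inter> L k)"
proof -
  let ?f = "opn (n + 2)"
  have f: "?f = opn n" using opn_SS by simp
  have e1: "Q (n + 3) \<inter> L (Suc k) = (Q (n + 2) \<inter> L (Suc k)) \<union> ?f ` (Q (n + 2) \<inter> L k)"
    using Q_step[of "n + 2"] opn_L by (auto simp: numeral_3_eq_3)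
  have e2: "(Q (n + 2) \<inter> L (Suc k)) \<inter> ?f ` (Q (n + 2) \<inter> L k) = ?f ` (Q n \<inter> L k)"
    using Q_overlap[of n] f opn_L[of "n + 2"] by auto
  have fin: "finite (Q (n + 2) \<inter> L (Suc k))" "finite (?f ` (Q (n + 2) \<inter> L k))"
    using finite_Q by auto
  have c1: "card (?f ` (Q (n + 2) \<inter> L k)) = card (Q (n + 2) \<inter> L k)"
    by (rule card_image) (meson inj_on_subset opn_inj subset_UNIV)
  have c2: "card (?f ` (Q n \<inter> L k)) = card (Q n \<inter> L k)"
    by (rule card_image) (meson inj_on_subset opn_inj subset_UNIV)
  show ?thesis using card_Un_Int[OF fin] e1 e2 c1 c2 by simp
qed

lemma card_rec_total:
  "card (Q (n + 3)) + card (Q n) = 2 * card (Q (n + 2))"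
proof -
  let ?f = "opn (n + 2)"
  have f: "?f = opn n" using opn_SS by simp
  have e1: "Q (n + 3) = Q (n + 2) \<union> ?f ` Q (n + 2)"
    using Q_step[of "n + 2"] by (simp add: numeral_3_eq_3)
  have e2: "Q (n + 2) \<inter> ?f ` Q (n + 2) = ?f ` Q n"
    using Q_overlap[of n] f by simp
  have fin: "finite (Q (n + 2))" "finite (?f ` Q (n + 2))"
    using finite_Q by auto
  have c1: "card (?f ` Q (n + 2)) = card (Q (n + 2))"
    by (rule card_image) (meson inj_on_subset opn_inj subset_UNIV)
  have c2: "card (?f ` Q n) = card (Q n)"
    by (rule card_image) (meson inj_on_subset opn_inj subset_UNIV)
  show ?thesis using card_Un_Int[OF fin] e1 e2 c1 c2 by simp
qed

lemma Q1: "Q 1 = {[], [1,1]}"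
  using Q_step[of 0] by (auto simp: Q0 opn_def app_def)

lemma Q2: "Q 2 = {[], [1,1], [1,2,2,1]}"
proof -
  have "Q (Suc (Suc 0)) = Q (Suc 0) \<union> opn (Suc 0) ` Q (Suc 0)" by (rule Q_step)
  moreover have "Q (Suc 0) = {[], [1,1]}" using Q1 by simp
  moreover have "opn (Suc 0) = lft" by (simp add: opn_def fun_eq_iff)
  ultimately have "Q (Suc (Suc 0)) = {[], [1,1]} \<union> lft ` {[], [1,1]}" by simp
  moreover have "lft ` {[], [1,1]} = {[1,1], [1,2,2,1]}" by (simp add: lft_def numeral_2_eq_2)
  ultimately have "Q (Suc (Suc 0)) = {[], [1,1], [1,2,2,1]}" by auto
  then show ?thesis by (simp add: numeral_2_eq_2)
qed

definition B :: "nat \<Rightarrow> nat \<Rightarrow> nat" where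
  "B n k = (if k = 0 then 1 else if k \<le> n then (\<Sum>i = 0..n - k. (k - 1) choose i) else 0)"

lemma sum_choose0: "(\<Sum>i = 0..N. (0::nat) choose i) = 1"
  by (induction N) auto

lemma B_rec: "B (n + 3) (Suc k) + B n k = B (n + 2) (Suc k) + B (n + 2) k"
proof (cases k)
  case 0
  then show ?thesis by (simp add: B_def sum_choose0)
next
  case (Suc j)
  show ?thesis
  proof (cases "j \<le> n")
    case True
    then obtain d where n: "n = j + d" using le_Suc_ex by blast
    show ?thesis
    proof (cases d)
      case 0
      then show ?thesis using Suc n by (simp add: B_def)
    next
      case (Suc e)
      have a: "B (n + 3) (Suc k) = (\<Sum>i = 0..Suc (Suc e). (Suc j) choose i)"
        using \<open>k = Suc j\<close> n Suc by (simp add: B_def)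
      have b: "B n k = (\<Sum>i = 0..e. j choose i)"
        using \<open>k = Suc j\<close> n Suc by (simp add: B_def)
      have c: "B (n + 2) (Suc k) = (\<Sum>i = 0..Suc e. (Suc j) choose i)"
        using \<open>k = Suc j\<close> n Suc by (simp add: B_def)
      have d: "B (n + 2) k = (\<Sum>i = 0..Suc (Suc e). j choose i)"
        using \<open>k = Suc j\<close> n Suc by (simp add: B_def)
      show ?thesis unfolding a b c d by (simp add: binomial_Suc_Suc)
    qed
  next
    case False
    then show ?thesis using Suc by (cases "j = Suc n") (auto simp: B_def)
  qed
qed

lemma Q1': "Q (Suc 0) = {[], [1,1]}"
  using Q1 by simp

lemma QL0: "Q n \<inter> L 0 = {[]}"
  using Nil_Q by (auto simp: L_def)

lemma card_QL: "card (Q n \<inter> L k) = B n k"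
proof -
  have "\<forall>k. card (Q n \<inter> L k) = B n k \<and> card (Q (n + 1) \<inter> L k) = B (n + 1) k \<and> card (Q (n + 2) \<inter> L k) = B (n + 2) k"
  proof (induction n)
    case 0
    have q0: "Q 0 \<inter> L k = (if k = 0 then {[]} else {})" for k
      by (auto simp: Q0 L_def)
    have q1: "Q 1 \<inter> L k = (if k = 0 then {[]} else if k = 1 then {[1,1]} else {})" for k
      by (auto simp: Q1' L_def)
    have q2: "Q 2 \<inter> L k = (if k = 0 then {[]} else if k = 1 then {[1,1]} else if k = 2 then {[1,2,2,1]} else {})" for k
      by (auto simp: Q2 L_def)
    have b1: "B 1 k = (if k \<le> 1 then 1 else 0)" for k
      by (cases k) (auto simp: B_def)
    have b2: "B 2 k = (if k \<le> 2 then 1 else 0)" for k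
    proof -
      consider "k = 0" | "k = 1" | "k = 2" | "k > 2" by linarith
      then show ?thesis by cases (auto simp: B_def numeral_2_eq_2)
    qed
    have c0: "card (Q 0 \<inter> L k) = B 0 k" for k by (simp add: q0 B_def)
    have c1: "card (Q 1 \<inter> L k) = B 1 k" for k
      unfolding q1 b1 by (cases k) auto
    have c2: "card (Q 2 \<inter> L k) = B 2 k" for k
      unfolding q2 b2 by simp
    show ?case by (simp only: add_0 c0 c1 c2 simp_thms)
  next
    case (Suc n)
    have new: "card (Q (n + 3) \<inter> L k) = B (n + 3) k" for k
    proof (cases k)
      case 0 then show ?thesis using QL0 by (simp add: B_def)
    next
      case (Suc k')
      have "card (Q (n + 3) \<inter> L (Suc k')) + card (Q n \<inter> L k') = card (Q (n + 2) \<inter> L (Suc k')) + card (Q (n + 2) \<inter> L k')"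
        by (rule card_rec)
      moreover have "B (n + 3) (Suc k') + B n k' = B (n + 2) (Suc k') + B (n + 2) k'" by (rule B_rec)
      moreover have "card (Q n \<inter> L k') = B n k'" "card (Q (n + 2) \<inter> L (Suc k')) = B (n + 2) (Suc k')"
        "card (Q (n + 2) \<inter> L k') = B (n + 2) k'"
        using Suc.IH by auto
      ultimately show ?thesis unfolding \<open>k = Suc k'\<close> by linarith
    qed
    show ?case using Suc.IH new by (simp add: numeral_3_eq_3)
  qed
  then show ?thesis by blast
qed

lemma card_Q: "card (Q n) = fib (n + 2)"
proof -
  have "card (Q n) = fib (n + 2) \<and> card (Q (n + 1)) = fib (n + 3) \<and> card (Q (n + 2)) = fib (n + 4)"
  proof (induction n)
    case 0
    have "card (Q 2) = 3" by (simp add: Q2)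
    moreover have "card (Q 1) = 2" by (simp add: Q1')
    ultimately show ?case by (simp add: Q0 numeral_3_eq_3 numeral_2_eq_2 eval_nat_numeral)
  next
    case (Suc n)
    have "card (Q (n + 3)) + card (Q n) = 2 * card (Q (n + 2))" by (rule card_rec_total)
    moreover have "fib (n + 5) + fib (n + 2) = 2 * fib (n + 4)"
      by (simp add: eval_nat_numeral)
    ultimately have "card (Q (n + 3)) = fib (n + 5)" using Suc.IH by linarith
    then show ?case using Suc.IH by (simp add: eval_nat_numeral)
  qed
  then show ?thesis by blast
qed

lemma pat11: "is_matching s \<Longrightarrow> is_pattern [1,1] s \<longleftrightarrow> s \<noteq> []"
proof
  assume "is_pattern [1,1] s"
  then show "s \<noteq> []" using pat_into_Nil by fastforce
next
  assume m: "is_matching s" and ne: "s \<noteq> []"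
  then obtain q where q: "q < length s" "q \<noteq> 0" "s ! q = s ! 0"
    using matching_partner[OF m, of 0] by auto
  show "is_pattern [1,1] s" unfolding is_pattern_iff
  proof (rule exI[of _ "\<lambda>i. if i = 0 then 0 else q"], intro conjI allI impI)
    fix i j assume "i < j" "j < length [1::nat, 1]" then show "(if i = 0 then 0 else q) < (if j = 0 then 0 else q)"
      using q by auto
  next
    fix i assume "i < length [1::nat, 1]" then show "(if i = 0 then 0 else q) < length s" using q by auto
  next
    fix i j assume "i < length [1::nat, 1]" "j < length [1::nat, 1]" "i \<noteq> j"
    then show "(s ! (if i = 0 then 0 else q) = s ! (if j = 0 then 0 else q)) = ([1::nat, 1] ! i = [1, 1] ! j)"
      using q by (auto simp: less_2_cases_iff nth_Cons')
  qed
qed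

lemma interval_Q: "interval11 (tau n) = Q n - {[]}"
  using pat11 by (auto simp: interval11_def Q_def)

theorem proposition6:
  fixes n :: nat
  assumes "n > 0"
  shows "(\<forall>k. 0 < k \<and> k \<le> n \<longrightarrow>
            card {\<sigma> \<in> interval11 (tau n). length \<sigma> = 2 * k} = (\<Sum>i = 0..n - k. (k - 1) choose i))
         \<and> card (interval11 (tau n)) = fib (n + 2) - 1"
proof (intro conjI allI impI)
  fix k assume k: "0 < k \<and> k \<le> n"
  have "{\<sigma> \<in> interval11 (tau n). length \<sigma> = 2 * k} = Q n \<inter> L k"
    using k by (auto simp: interval_Q L_def)
  then have "card {\<sigma> \<in> interval11 (tau n). length \<sigma> = 2 * k} = B n k" using card_QL by simp
  then show "card {\<sigma> \<in> interval11 (tau n). length \<sigma> = 2 * k} = (\<Sum>i = 0..n - k. (k - 1) choose i)"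
    using k by (simp add: B_def)
next
  show "card (interval11 (tau n)) = fib (n + 2) - 1"
    using interval_Q card_Q Nil_Q finite_Q by (simp add: card_Diff_singleton)
qed

end
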